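(* Let $(\mathfrak{g},[\cdot,\cdot]_{\mathfrak{g}},\phi_{\mathfrak{g}})$ and $(\mathfrak{g}^*,[\cdot,\cdot]_{\mathfrak{g}^*},\phi_{\mathfrak{g}}^* )$ be two weakly involutive Hom-Lie algebras, where $\mathfrak{g}$ is finite-dimensional, $\mathfrak g^*$ is its dual space and $\phi_{\mathfrak{g}}^*$ is the dual map of $\phi_{\mathfrak{g}}$. Define $\Delta:\mathfrak{g}\to\mathfrak{g}\otimes\mathfrak{g}$ by $\langle \Delta(x),a\otimes b\rangle=\langle x,[a,b]_{\mathfrak{g}^*}\rangle$. Then the following conditions are equivalent: (i) $(\mathfrak{g},\mathfrak{g}^* )$ is a Hom-Lie bialgebra, i.e. $\Delta([x,y]_{\mathfrak{g}})=\mathrm{ad}_{\phi_{\mathfrak{g}}(x)}\Delta(y)-\mathrm{ad}_{\phi_{\mathfrak{g}}(y)}\Delta(x)$ for all $x,y\in\mathfrak{g}$; (ii) $(\mathfrak{g},\mathfrak{g}^*;\mathrm{ad}^\circ,\mathfrak{ad}^\circ)$ is a matched pair of Hom-Lie algebras; (iii) $(\mathfrak{g}\oplus\mathfrak{g}^*;\mathfrak{g},\mathfrak{g}^* )$ is a Manin triple of Hom-Lie algebras associated to the bilinear form $\mathfrak{B}(x+a,y+b)=\langle x,b\rangle+\langle y,a\rangle$ ($x,y\in\mathfrak g$, $a,b\in\mathfrak g^*$).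
   Context: A Hom-Lie algebra $(\mathfrak{h},[\cdot,\cdot]_{\mathfrak{h}},\phi_{\mathfrak{h}})$ is a vector space $\mathfrak h$ with a skew-symmetric bilinear map $[\cdot,\cdot]_{\mathfrak h}$ and a linear map $\phi_{\mathfrak h}$ satisfying $\phi_{\mathfrak h}[x,y]_{\mathfrak h}=[\phi_{\mathfrak h}(x),\phi_{\mathfrak h}(y)]_{\mathfrak h}$ and the Hom-Jacobi identity $[\phi_{\mathfrak h}(x),[y,z]_{\mathfrak h}]_{\mathfrak h}+[\phi_{\mathfrak h}(y),[z,x]_{\mathfrak h}]_{\mathfrak h}+[\phi_{\mathfrak h}(z),[x,y]_{\mathfrak h}]_{\mathfrak h}=0$. It is weakly involutive if $[\phi_{\mathfrak h}^2(x),y]_{\mathfrak h}=[x,y]_{\mathfrak h}$ for all $x,y$. A representation $(V,\beta,\rho)$ of $\mathfrak h$ is a vector space $V$, $\beta\in\mathfrak{gl}(V)$ and a linear map $\rho:\mathfrak h\to\mathfrak{gl}(V)$ with $\rho(\phi_{\mathfrak h}(x))\beta=\beta\rho(x)$ and $\rho([x,y]_{\mathfrak h})\beta=\rho(\phi_{\mathfrak h}(x))\rho(y)-\rho(\phi_{\mathfrak h}(y))\rho(x)$. The adjoint representation is $(\mathfrak h,\phi_{\mathfrak h},\mathrm{ad})$, $\mathrm{ad}_x y=[x,y]_{\mathfrak h}$. For $z\in\mathfrak g$ and $t\in\mathfrak g\otimes\mathfrak g$, $\mathrm{ad}_z t:=(\mathrm{ad}_z\otimes\phi_{\mathfrak g}+\phi_{\mathfrak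 g}\otimes \mathrm{ad}_z)t$. Here $\mathrm{ad}^\circ:\mathfrak g\to\mathfrak{gl}(\mathfrak g^* )$ is given by $\langle \mathrm{ad}^\circ_x a,y\rangle=-\langle a,[\phi_{\mathfrak g}(x),y]_{\mathfrak g}\rangle$ and $\mathfrak{ad}^\circ:\mathfrak g^*\to\mathfrak{gl}(\mathfrak g)$ is given by $\langle \mathfrak{ad}^\circ_a x,b\rangle=-\langle x,[\phi_{\mathfrak g}^*(a),b]_{\mathfrak g^*}\rangle$. A matched pair of Hom-Lie algebras $(\mathfrak g,\mathfrak g';\rho,\rho')$ consists of Hom-Lie algebras $(\mathfrak g,[\cdot,\cdot]_{\mathfrak g},\phi_{\mathfrak g})$, $(\mathfrak g',[\cdot,\cdot]_{\mathfrak g'},\phi_{\mathfrak g'})$, a representation $(\mathfrak g',\phi_{\mathfrak g'},\rho)$ of $\mathfrak g$ and a representation $(\mathfrak g,\phi_{\mathfrak g},\rho')$ of $\mathfrak g'$ such that for all $x,y\in\mathfrak g$, $x',y'\in\mathfrak g'$: $\rho'(\phi_{\mathfrak g'}(x'))[x,y]_{\mathfrak g}=[\rho'(x')x,\phi_{\mathfrak g}(y)]_{\mathfrak g}+[\phi_{\mathfrak g}(x),\rho'(x')y]_{\mathfrak g}+\rho'(\rho(y)x')\phi_{\mathfrak g}(x)-\rho'(\rho(x)x')\phi_{\mathfrak g}(y)$ and $\rho(\phi_{\mathfrak g}(x))[x',y']_{\mathfrak g'}=[\rho(x)x',\phi_{\mathfrak g'}(y')]_{\mathfrak g'}+[\phi_{\mathfrak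 g'}(x'),\rho(x)y']_{\mathfrak g'}+\rho(\rho'(y')x)\phi_{\mathfrak g'}(x')-\rho(\rho'(x')x)\phi_{\mathfrak g'}(y')$. A bilinear form $\mathfrak B$ on a Hom-Lie algebra $(\mathfrak k,[\cdot,\cdot]_{\mathfrak k},\phi_{\mathfrak k})$ is invariant if $\mathfrak B([x,y]_{\mathfrak k},z)=\mathfrak B(x,[\phi_{\mathfrak k}(y),z]_{\mathfrak k})$ and $\mathfrak B(\phi_{\mathfrak k}(x),y)=\mathfrak B(x,\phi_{\mathfrak k}(y))$ for all $x,y,z$. A Manin triple of Hom-Lie algebras $(\mathfrak k;\mathfrak g,\mathfrak g')$ is a Hom-Lie algebra $\mathfrak k$ with a nondegenerate symmetric invariant bilinear form $\mathfrak B$ such that $\mathfrak g,\mathfrak g'$ are isotropic Hom-Lie subalgebras of $\mathfrak k$ (subspaces closed under the bracket and stable under $\phi_{\mathfrak k}$, with the induced structures being the given Hom-Lie algebra structures) and $\mathfrak k=\mathfrak g\oplus\mathfrak g'$ as vector spaces. *)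

theory Defs
  imports Main "HOL-Library.Product_Plus" "HOL-Library.Function_Algebras"
begin

definition lin :: "('k \<Rightarrow> 'v \<Rightarrow> 'v) \<Rightarrow> ('k \<Rightarrow> 'w \<Rightarrow> 'w) \<Rightarrow> ('v::plus \<Rightarrow> 'w::plus) \<Rightarrow> bool" where
  "lin sv sw f \<longleftrightarrow> (\<forall>x y. f (x + y) = f x + f y) \<and> (\<forall>c x. f (sv c x) = sw c (f x))"

definition bilin :: "('k \<Rightarrow> 'v \<Rightarrow> 'v) \<Rightarrow> ('k \<Rightarrow> 'w \<Rightarrow> 'w) \<Rightarrow> ('v::plus \<Rightarrow> 'v \<Rightarrow> 'w::plus) \<Rightarrow> bool" where
  "bilin sv sw br \<longleftrightarrow> (\<forall>x. lin sv sw (br x)) \<and> (\<forall>y. lin sv sw (\<lambda>x. br x y))"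

definition hom_lie :: "('k \<Rightarrow> 'v \<Rightarrow> 'v) \<Rightarrow> ('v::ab_group_add \<Rightarrow> 'v \<Rightarrow> 'v) \<Rightarrow> ('v \<Rightarrow> 'v) \<Rightarrow> bool" where
  "hom_lie sm br phi \<longleftrightarrow> bilin sm sm br \<and> (\<forall>x y. br x y = - br y x) \<and> lin sm sm phi
     \<and> (\<forall>x y. phi (br x y) = br (phi x) (phi y))
     \<and> (\<forall>x y z. br (phi x) (br y z) + br (phi y) (br z x) + br (phi z) (br x y) = 0)"

definition weakly_involutive :: "('v \<Rightarrow> 'v \<Rightarrow> 'v) \<Rightarrow> ('v \<Rightarrow> 'v) \<Rightarrow> bool" where
  "weakly_involutive br phi \<longleftrightarrow> (\<forall>x y. br (phi (phi x)) y = br x y)"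

definition representation :: "('k \<Rightarrow> 'h \<Rightarrow> 'h) \<Rightarrow> ('h \<Rightarrow> 'h \<Rightarrow> 'h) \<Rightarrow> ('h \<Rightarrow> 'h)
    \<Rightarrow> ('k \<Rightarrow> 'v \<Rightarrow> 'v) \<Rightarrow> ('v \<Rightarrow> 'v) \<Rightarrow> ('h::ab_group_add \<Rightarrow> 'v::ab_group_add \<Rightarrow> 'v) \<Rightarrow> bool" where
  "representation smh brh phih smV beta rho \<longleftrightarrow>
     lin smV smV beta \<and> (\<forall>x. lin smV smV (rho x)) \<and> (\<forall>v. lin smh smV (\<lambda>x. rho x v))
     \<and> (\<forall>x v. rho (phih x) (beta v) = beta (rho x v))
     \<and> (\<forall>x y v. rho (brh x y) (beta v) = rho (phih x) (rho y v) - rho (phih y) (rho x v))"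

definition matched_pair :: "('k \<Rightarrow> 'g \<Rightarrow> 'g) \<Rightarrow> ('g \<Rightarrow> 'g \<Rightarrow> 'g) \<Rightarrow> ('g \<Rightarrow> 'g)
    \<Rightarrow> ('k \<Rightarrow> 'h \<Rightarrow> 'h) \<Rightarrow> ('h \<Rightarrow> 'h \<Rightarrow> 'h) \<Rightarrow> ('h \<Rightarrow> 'h)
    \<Rightarrow> ('g::ab_group_add \<Rightarrow> 'h::ab_group_add \<Rightarrow> 'h) \<Rightarrow> ('h \<Rightarrow> 'g \<Rightarrow> 'g) \<Rightarrow> bool" where
  "matched_pair smg brg phig smh brh phih rho rho' \<longleftrightarrow>
     hom_lie smg brg phig \<and> hom_lie smh brh phih
     \<and> representation smg brg phig smh phih rho
     \<and> representation smh brh phih smg phig rho'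
     \<and> (\<forall>x y x'. rho' (phih x') (brg x y) =
           brg (rho' x' x) (phig y) + brg (phig x) (rho' x' y)
           + rho' (rho y x') (phig x) - rho' (rho x x') (phig y))
     \<and> (\<forall>x x' y'. rho (phig x) (brh x' y') =
           brh (rho x x') (phih y') + brh (phih x') (rho x y')
           + rho (rho' y' x) (phih x') - rho (rho' x' x) (phih y'))"

definition invariant_form :: "('v \<Rightarrow> 'v \<Rightarrow> 'k) \<Rightarrow> ('v \<Rightarrow> 'v \<Rightarrow> 'v) \<Rightarrow> ('v \<Rightarrow> 'v) \<Rightarrow> bool" where
  "invariant_form B br phi \<longleftrightarrow> (\<forall>x y z. B (br x y) z = B x (br (phi y) z))
      \<and> (\<forall>x y. B (phi x) y = B x (phi y))"

section \<open>Coordinates: g = 'n \<Rightarrow> 'k, g* identified with 'n \<Rightarrow> 'k via the pairing below\<close>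

definition sc :: "'k::times \<Rightarrow> ('n \<Rightarrow> 'k) \<Rightarrow> ('n \<Rightarrow> 'k)" where
  "sc c x = (\<lambda>i. c * x i)"

definition psc :: "'k::times \<Rightarrow> ('n \<Rightarrow> 'k) \<times> ('n \<Rightarrow> 'k) \<Rightarrow> ('n \<Rightarrow> 'k) \<times> ('n \<Rightarrow> 'k)" where
  "psc c u = (sc c (fst u), sc c (snd u))"

definition pairing :: "('n::finite \<Rightarrow> 'k::field) \<Rightarrow> ('n \<Rightarrow> 'k) \<Rightarrow> 'k" where
  "pairing x a = (\<Sum>i\<in>UNIV. x i * a i)"

definition ev :: "'n \<Rightarrow> ('n \<Rightarrow> 'k::field)" where
  "ev j = (\<lambda>i. if i = j then 1 else 0)"

text \<open>Dual map: pairing x (dual_map phi a) = pairing (phi x) a.\<close>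
definition dual_map :: "(('n::finite \<Rightarrow> 'k::field) \<Rightarrow> ('n \<Rightarrow> 'k)) \<Rightarrow> ('n \<Rightarrow> 'k) \<Rightarrow> ('n \<Rightarrow> 'k)" where
  "dual_map phi a = (\<lambda>j. pairing (phi (ev j)) a)"

text \<open>ad-circ x a: pairing y (ad-circ x a) = - pairing [phi x, y] a.\<close>
definition adc :: "(('n::finite \<Rightarrow> 'k::field) \<Rightarrow> ('n \<Rightarrow> 'k) \<Rightarrow> ('n \<Rightarrow> 'k)) \<Rightarrow> (('n \<Rightarrow> 'k) \<Rightarrow> ('n \<Rightarrow> 'k))
    \<Rightarrow> ('n \<Rightarrow> 'k) \<Rightarrow> ('n \<Rightarrow> 'k) \<Rightarrow> ('n \<Rightarrow> 'k)" where
  "adc br phi x a = (\<lambda>j. - pairing (br (phi x) (ev j)) a)"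

text \<open>frak-ad-circ a x: pairing (frak-ad-circ a x) b = - pairing x [phi* a, b].\<close>
definition adcd :: "(('n::finite \<Rightarrow> 'k::field) \<Rightarrow> ('n \<Rightarrow> 'k) \<Rightarrow> ('n \<Rightarrow> 'k)) \<Rightarrow> (('n \<Rightarrow> 'k) \<Rightarrow> ('n \<Rightarrow> 'k))
    \<Rightarrow> ('n \<Rightarrow> 'k) \<Rightarrow> ('n \<Rightarrow> 'k) \<Rightarrow> ('n \<Rightarrow> 'k)" where
  "adcd brd phi a x = (\<lambda>j. - pairing x (brd (dual_map phi a) (ev j)))"

text \<open>Tensors in g \<otimes> g are coefficient arrays t p q w.r.t. the basis ev p \<otimes> ev q.\<close>
definition Delta :: "(('n::finite \<Rightarrow> 'k::field) \<Rightarrow> ('n \<Rightarrow> 'k) \<Rightarrow> ('n \<Rightarrow> 'k)) \<Rightarrow> ('n \<Rightarrow> 'k) \<Rightarrow> 'n \<Rightarrow> 'n \<Rightarrow> 'k" where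
  "Delta brd x = (\<lambda>p q. pairing x (brd (ev p) (ev q)))"

definition tmap :: "(('n::finite \<Rightarrow> 'k::field) \<Rightarrow> ('n \<Rightarrow> 'k)) \<Rightarrow> (('n \<Rightarrow> 'k) \<Rightarrow> ('n \<Rightarrow> 'k))
    \<Rightarrow> ('n \<Rightarrow> 'n \<Rightarrow> 'k) \<Rightarrow> 'n \<Rightarrow> 'n \<Rightarrow> 'k" where
  "tmap L M t = (\<lambda>i j. \<Sum>p\<in>UNIV. \<Sum>q\<in>UNIV. t p q * L (ev p) i * M (ev q) j)"

definition tad :: "(('n::finite \<Rightarrow> 'k::field) \<Rightarrow> ('n \<Rightarrow> 'k) \<Rightarrow> ('n \<Rightarrow> 'k)) \<Rightarrow> (('n \<Rightarrow> 'k) \<Rightarrow> ('n \<Rightarrow> 'k))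
    \<Rightarrow> ('n \<Rightarrow> 'k) \<Rightarrow> ('n \<Rightarrow> 'n \<Rightarrow> 'k) \<Rightarrow> 'n \<Rightarrow> 'n \<Rightarrow> 'k" where
  "tad br phi z t = (\<lambda>i j. tmap (br z) phi t i j + tmap phi (br z) t i j)"

definition hom_lie_bialgebra :: "(('n::finite \<Rightarrow> 'k::field) \<Rightarrow> ('n \<Rightarrow> 'k) \<Rightarrow> ('n \<Rightarrow> 'k)) \<Rightarrow> (('n \<Rightarrow> 'k) \<Rightarrow> ('n \<Rightarrow> 'k))
    \<Rightarrow> (('n \<Rightarrow> 'k) \<Rightarrow> ('n \<Rightarrow> 'k) \<Rightarrow> ('n \<Rightarrow> 'k)) \<Rightarrow> bool" where
  "hom_lie_bialgebra br phi brd \<longleftrightarrow>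
     (\<forall>x y. Delta brd (br x y) =
        (\<lambda>i j. tad br phi (phi x) (Delta brd y) i j - tad br phi (phi y) (Delta brd x) i j))"

definition Bform :: "('n::finite \<Rightarrow> 'k::field) \<times> ('n \<Rightarrow> 'k) \<Rightarrow> ('n \<Rightarrow> 'k) \<times> ('n \<Rightarrow> 'k) \<Rightarrow> 'k" where
  "Bform u v = pairing (fst u) (snd v) + pairing (fst v) (snd u)"

text \<open>Manin triple (k; g, g*) with k = g \<oplus> g* (as the product type), g embedded as (x,0), g* as (0,a),
  Hom-Lie structure (K, Phi) on k, and the given bilinear form B.\<close>
definition manin_triple_sum ::
  "(('n::finite \<Rightarrow> 'k::field) \<times> ('n \<Rightarrow> 'k) \<Rightarrow> ('n \<Rightarrow> 'k) \<times> ('n \<Rightarrow> 'k) \<Rightarrow> ('n \<Rightarrow> 'k) \<times> ('n \<Rightarrow> 'k))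
   \<Rightarrow> (('n \<Rightarrow> 'k) \<times> ('n \<Rightarrow> 'k) \<Rightarrow> ('n \<Rightarrow> 'k) \<times> ('n \<Rightarrow> 'k))
   \<Rightarrow> (('n \<Rightarrow> 'k) \<times> ('n \<Rightarrow> 'k) \<Rightarrow> ('n \<Rightarrow> 'k) \<times> ('n \<Rightarrow> 'k) \<Rightarrow> 'k)
   \<Rightarrow> (('n \<Rightarrow> 'k) \<Rightarrow> ('n \<Rightarrow> 'k) \<Rightarrow> ('n \<Rightarrow> 'k)) \<Rightarrow> (('n \<Rightarrow> 'k) \<Rightarrow> ('n \<Rightarrow> 'k))
   \<Rightarrow> (('n \<Rightarrow> 'k) \<Rightarrow> ('n \<Rightarrow> 'k) \<Rightarrow> ('n \<Rightarrow> 'k)) \<Rightarrow> (('n \<Rightarrow> 'k) \<Rightarrow> ('n \<Rightarrow> 'k)) \<Rightarrow> bool" where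
  "manin_triple_sum K Phi B br phi brd phid \<longleftrightarrow>
     hom_lie psc K Phi
     \<and> bilin psc (\<lambda>c s. c * s) B
     \<and> (\<forall>u v. B u v = B v u)
     \<and> (\<forall>u. (\<forall>v. B u v = 0) \<longrightarrow> u = 0)
     \<and> invariant_form B K Phi
     \<and> (\<forall>x y. K (x, 0) (y, 0) = (br x y, 0)) \<and> (\<forall>x. Phi (x, 0) = (phi x, 0))
     \<and> (\<forall>a b. K (0, a) (0, b) = (0, brd a b)) \<and> (\<forall>a. Phi (0, a) = (0, phid a))
     \<and> (\<forall>x y. B (x, 0) (y, 0) = 0) \<and> (\<forall>a b. B (0, a) (0, b) = 0)"

end

theory Submission
  imports Defs
begin


lemma lin_add: "lin sv sw f \<Longrightarrow> f (x + y) = f x + f y"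
  unfolding lin_def by blast

lemma lin_scale: "lin sv sw f \<Longrightarrow> f (sv c x) = sw c (f x)"
  unfolding lin_def by blast

lemma lin_zero: "lin sv sw (f::'v::ab_group_add \<Rightarrow> 'w::ab_group_add) \<Longrightarrow> f 0 = 0"
proof -
  assume l: "lin sv sw f"
  have "f 0 = f 0 + f 0" using lin_add[OF l, of 0 0] by simp
  then show ?thesis by (rule add_cancel_right_right[THEN iffD1])
qed

lemma lin_minus: "lin sv sw (f::'v::ab_group_add \<Rightarrow> 'w::ab_group_add) \<Longrightarrow> f (- x) = - f x"
proof -
  assume l: "lin sv sw f"
  have "f x + f (- x) = 0" using lin_add[OF l, of x "- x"] lin_zero[OF l] by simp
  then show ?thesis by (simp add: eq_neg_iff_add_eq_0 add.commute)
qed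

lemma lin_diff: "lin sv sw (f::'v::ab_group_add \<Rightarrow> 'w::ab_group_add) \<Longrightarrow> f (x - y) = f x - f y"
  using lin_add[of sv sw f x "- y"] lin_minus[of sv sw f y] by simp

lemma lin_sum: "lin sv sw (f::'v::ab_group_add \<Rightarrow> 'w::ab_group_add) \<Longrightarrow> f (sum g A) = (\<Sum>i\<in>A. f (g i))"
proof (induction A rule: infinite_finite_induct)
  case (infinite A) then show ?case by (simp add: lin_zero)
next
  case empty then show ?case by (simp add: lin_zero)
next
  case (insert x F) then show ?case by (simp add: lin_add)
qed

lemma sum_fun_apply: "(sum g A) x = (\<Sum>i\<in>A. g i x)"
  by (induction A rule: infinite_finite_induct) auto

lemma sc_apply[simp]: "sc c x i = c * x i" by (simp add: sc_def)

lemma vec_decomp: "(x :: 'n::finite \<Rightarrow> 'k::field) = (\<Sum>j\<in>UNIV. sc (x j) (ev j))"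
proof
  fix i
  have "(\<Sum>j\<in>UNIV. sc (x j) (ev j)) i = (\<Sum>j\<in>UNIV. x j * (if i = j then 1 else 0))"
    by (simp add: sum_fun_apply ev_def)
  also have "\<dots> = x i" by (simp add: if_distrib cong: if_cong)
  finally show "x i = (\<Sum>j\<in>UNIV. sc (x j) (ev j)) i" by simp
qed

lemma lin_decomp: "lin sc sw f \<Longrightarrow> f (x :: 'n::finite \<Rightarrow> 'k::field) = (\<Sum>j\<in>UNIV. sw (x j) (f (ev j)))"
  for f :: "_ \<Rightarrow> 'w::ab_group_add"
  by (subst vec_decomp) (simp add: lin_sum lin_scale)

lemma pairing_ev2[simp]: "pairing x (ev j) = x j"
  by (simp add: pairing_def ev_def if_distrib cong: if_cong)
lemma pairing_sym: "pairing x a = pairing a x"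
  by (simp add: pairing_def mult.commute)
lemma pairing_ev1[simp]: "pairing (ev j) x = x j"
  by (subst pairing_sym) simp
lemma lin_pairing1: "lin sc (\<lambda>c s. c * s) (\<lambda>x. pairing x a)"
  by (simp add: lin_def pairing_def sum.distrib distrib_right sum_distrib_left mult.assoc)
lemma lin_pairing2: "lin sc (\<lambda>c s. c * s) (pairing x)"
  by (simp add: lin_def pairing_def sum.distrib distrib_left sum_distrib_left mult.assoc mult.left_commute)

lemmas pairing_add1 = lin_add[OF lin_pairing1] and pairing_add2 = lin_add[OF lin_pairing2]
  and pairing_minus1 = lin_minus[OF lin_pairing1] and pairing_minus2 = lin_minus[OF lin_pairing2]
  and pairing_diff1 = lin_diff[OF lin_pairing1] and pairing_diff2 = lin_diff[OF lin_pairing2]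
  and pairing_zero1 = lin_zero[OF lin_pairing1] and pairing_zero2 = lin_zero[OF lin_pairing2]
  and pairing_sc1 = lin_scale[OF lin_pairing1] and pairing_sc2 = lin_scale[OF lin_pairing2]
lemmas pairing_simps[simp] = pairing_add1 pairing_add2 pairing_minus1 pairing_minus2 pairing_diff1
  pairing_diff2 pairing_zero1 pairing_zero2 pairing_sc1 pairing_sc2

lemma pairing_lin: "lin sc sc f \<Longrightarrow> pairing (f x) a = (\<Sum>j\<in>UNIV. x j * pairing (f (ev j)) a)"
  for f :: "('n::finite \<Rightarrow> 'k::field) \<Rightarrow> ('n \<Rightarrow> 'k)"
  by (subst lin_decomp[where f=f], assumption) (simp add: lin_sum[OF lin_pairing1])

lemma vec_eqI1: "(\<And>j. pairing (ev j) u = pairing (ev j) v) \<Longrightarrow> u = v"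
  by (simp add: fun_eq_iff)
lemma vec_eqI2: "(\<And>j. pairing u (ev j) = pairing v (ev j)) \<Longrightarrow> u = v"
  by (simp add: fun_eq_iff)

lemma pdual: "lin sc sc phi \<Longrightarrow> pairing x (dual_map phi a) = pairing (phi x) a"
proof -
  assume l: "lin sc sc phi"
  show ?thesis unfolding pairing_lin[OF l, of x a] by (simp add: dual_map_def pairing_def)
qed


lemma vec_eqI: "(\<And>y. pairing y u = pairing y v) \<Longrightarrow> u = v"
  by (rule vec_eqI1)
lemma vec_eqI': "(\<And>b. pairing u b = pairing v b) \<Longrightarrow> u = v"
  by (rule vec_eqI2)

lemma sum3_0: "a + b + c = (0::'a::ab_group_add) \<Longrightarrow> c = - a - b"
proof -
  assume h: "a + b + c = 0"
  have "c = (a + b + c) - (a + b)" by simp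
  also have "\<dots> = - (a + b)" using h by simp
  finally show ?thesis by simp
qed

lemma lin_sc_sc_I:
  "(\<And>x y. f (x + y) = f x + f y) \<Longrightarrow> (\<And>c x. f (sc c x) = sc c (f x)) \<Longrightarrow> lin sc sc f"
  by (simp add: lin_def)

locale HL =
  fixes br brd :: "('n::finite \<Rightarrow> 'k::field) \<Rightarrow> ('n \<Rightarrow> 'k) \<Rightarrow> ('n \<Rightarrow> 'k)"
    and phi :: "('n \<Rightarrow> 'k) \<Rightarrow> ('n \<Rightarrow> 'k)"
  assumes hl: "hom_lie sc br phi" and wi: "weakly_involutive br phi"
    and hld: "hom_lie sc brd (dual_map phi)" and wid: "weakly_involutive brd (dual_map phi)"
begin

abbreviation "phid \<equiv> dual_map phi"
abbreviation "ada \<equiv> adc br phi"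
abbreviation "adb \<equiv> adcd brd phi"

lemma lin_br2: "lin sc sc (br x)" using hl unfolding hom_lie_def bilin_def by blast
lemma lin_br1: "lin sc sc (\<lambda>x. br x y)" using hl unfolding hom_lie_def bilin_def by blast
lemma lin_phi: "lin sc sc phi" using hl unfolding hom_lie_def by blast
lemma br_skew: "br x y = - br y x" using hl unfolding hom_lie_def by blast
lemma phi_hom: "phi (br x y) = br (phi x) (phi y)" using hl unfolding hom_lie_def by blast
lemma br_jac: "br (phi x) (br y z) + br (phi y) (br z x) + br (phi z) (br x y) = 0"
  using hl unfolding hom_lie_def by blast
lemma br_wi[simp]: "br (phi (phi x)) y = br x y" using wi by (simp add: weakly_involutive_def)

lemma lin_brd2: "lin sc sc (brd x)" using hld unfolding hom_lie_def bilin_def by blast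
lemma lin_brd1: "lin sc sc (\<lambda>x. brd x y)" using hld unfolding hom_lie_def bilin_def by blast
lemma lin_phid: "lin sc sc phid" using hld unfolding hom_lie_def by blast
lemma brd_skew: "brd x y = - brd y x" using hld unfolding hom_lie_def by blast
lemma phid_hom: "phid (brd x y) = brd (phid x) (phid y)" using hld unfolding hom_lie_def by blast
lemma brd_jac: "brd (phid x) (brd y z) + brd (phid y) (brd z x) + brd (phid z) (brd x y) = 0"
  using hld unfolding hom_lie_def by blast
lemma brd_wi[simp]: "brd (phid (phid x)) y = brd x y" using wid by (simp add: weakly_involutive_def)

lemmas br_add1 = lin_add[OF lin_br1] and br_add2 = lin_add[OF lin_br2]
  and br_minus1 = lin_minus[OF lin_br1] and br_minus2 = lin_minus[OF lin_br2]
  and br_diff1 = lin_diff[OF lin_br1] and br_diff2 = lin_diff[OF lin_br2]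
  and br_zero1 = lin_zero[OF lin_br1] and br_zero2 = lin_zero[OF lin_br2]
  and br_sc1 = lin_scale[OF lin_br1] and br_sc2 = lin_scale[OF lin_br2]
lemmas brd_add1 = lin_add[OF lin_brd1] and brd_add2 = lin_add[OF lin_brd2]
  and brd_minus1 = lin_minus[OF lin_brd1] and brd_minus2 = lin_minus[OF lin_brd2]
  and brd_diff1 = lin_diff[OF lin_brd1] and brd_diff2 = lin_diff[OF lin_brd2]
  and brd_zero1 = lin_zero[OF lin_brd1] and brd_zero2 = lin_zero[OF lin_brd2]
  and brd_sc1 = lin_scale[OF lin_brd1] and brd_sc2 = lin_scale[OF lin_brd2]
lemmas phi_add = lin_add[OF lin_phi] and phi_minus = lin_minus[OF lin_phi]
  and phi_diff = lin_diff[OF lin_phi] and phi_zero = lin_zero[OF lin_phi] and phi_sc = lin_scale[OF lin_phi]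
lemmas phid_add = lin_add[OF lin_phid] and phid_minus = lin_minus[OF lin_phid]
  and phid_diff = lin_diff[OF lin_phid] and phid_zero = lin_zero[OF lin_phid] and phid_sc = lin_scale[OF lin_phid]
lemmas lsimps[simp] = br_add1 br_add2 br_minus1 br_minus2 br_diff1 br_diff2 br_zero1 br_zero2 br_sc1 br_sc2
  brd_add1 brd_add2 brd_minus1 brd_minus2 brd_diff1 brd_diff2 brd_zero1 brd_zero2 brd_sc1 brd_sc2
  phi_add phi_minus phi_diff phi_zero phi_sc phid_add phid_minus phid_diff phid_zero phid_sc

lemma lin_adc2: "lin sc sc (ada x)"
  by (rule lin_sc_sc_I) (simp_all add: adc_def fun_eq_iff)
lemma lin_adc1: "lin sc sc (\<lambda>x. ada x a)"
  by (rule lin_sc_sc_I) (simp_all add: adc_def fun_eq_iff)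
lemma lin_adcd2: "lin sc sc (adb a)"
  by (rule lin_sc_sc_I) (simp_all add: adcd_def fun_eq_iff)
lemma lin_adcd1: "lin sc sc (\<lambda>a. adb a x)"
  by (rule lin_sc_sc_I) (simp_all add: adcd_def fun_eq_iff)

lemmas adc_add1 = lin_add[OF lin_adc1] and adc_add2 = lin_add[OF lin_adc2]
  and adc_minus1 = lin_minus[OF lin_adc1] and adc_minus2 = lin_minus[OF lin_adc2]
  and adc_diff1 = lin_diff[OF lin_adc1] and adc_diff2 = lin_diff[OF lin_adc2]
  and adc_zero1 = lin_zero[OF lin_adc1] and adc_zero2 = lin_zero[OF lin_adc2]
  and adc_sc1 = lin_scale[OF lin_adc1] and adc_sc2 = lin_scale[OF lin_adc2]
lemmas adcd_add1 = lin_add[OF lin_adcd1] and adcd_add2 = lin_add[OF lin_adcd2]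
  and adcd_minus1 = lin_minus[OF lin_adcd1] and adcd_minus2 = lin_minus[OF lin_adcd2]
  and adcd_diff1 = lin_diff[OF lin_adcd1] and adcd_diff2 = lin_diff[OF lin_adcd2]
  and adcd_zero1 = lin_zero[OF lin_adcd1] and adcd_zero2 = lin_zero[OF lin_adcd2]
  and adcd_sc1 = lin_scale[OF lin_adcd1] and adcd_sc2 = lin_scale[OF lin_adcd2]
lemmas asimps[simp] = adc_add1 adc_add2 adc_minus1 adc_minus2 adc_diff1 adc_diff2 adc_zero1 adc_zero2
  adc_sc1 adc_sc2 adcd_add1 adcd_add2 adcd_minus1 adcd_minus2 adcd_diff1 adcd_diff2 adcd_zero1
  adcd_zero2 adcd_sc1 adcd_sc2

lemma pd: "pairing x (phid a) = pairing (phi x) a"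
  by (rule pdual[OF lin_phi])

lemma padc: "pairing y (ada x a) = - pairing (br (phi x) y) a"
proof -
  have "pairing y (ada x a) = (\<Sum>j\<in>UNIV. y j * ada x a j)" by (simp add: pairing_def)
  also have "\<dots> = - (\<Sum>j\<in>UNIV. y j * pairing (br (phi x) (ev j)) a)"
    by (simp add: adc_def sum_negf)
  also have "\<dots> = - pairing (br (phi x) y) a" by (subst pairing_lin[OF lin_br2, of "phi x" y a]) simp
  finally show ?thesis .
qed

lemma padcd: "pairing (adb a x) b = - pairing x (brd (phid a) b)"
proof -
  have "pairing (adb a x) b = (\<Sum>j\<in>UNIV. b j * adb a x j)" by (simp add: pairing_def mult.commute)
  also have "\<dots> = - (\<Sum>j\<in>UNIV. b j * pairing (brd (phid a) (ev j)) x)"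
    by (simp add: adcd_def sum_negf pairing_sym)
  also have "\<dots> = - pairing (brd (phid a) b) x" by (subst pairing_lin[OF lin_brd2, of "phid a" b x]) simp
  also have "\<dots> = - pairing x (brd (phid a) b)" by (simp add: pairing_sym)
  finally show ?thesis .
qed

lemma phi_br_wi: "phi (br (phi u) v) = br u (phi v)"
  by (simp add: phi_hom)
lemma phid_brd_wi: "phid (brd (phid u) v) = brd u (phid v)"
  by (simp add: phid_hom)

end


lemma sexp:
  fixes H :: "('n::finite \<Rightarrow> 'k::field) \<Rightarrow> ('n \<Rightarrow> 'k) \<Rightarrow> 'k"
  assumes l1: "\<And>v. lin sc (\<lambda>c s. c * s) (\<lambda>u. H u v)" and l2: "\<And>u. lin sc (\<lambda>c s. c * s) (H u)"
  shows "H u v = (\<Sum>p\<in>UNIV. \<Sum>q\<in>UNIV. u p * v q * H (ev p) (ev q))"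
proof -
  have "H u v = (\<Sum>p\<in>UNIV. u p * H (ev p) v)" by (rule lin_decomp[OF l1])
  also have "\<dots> = (\<Sum>p\<in>UNIV. u p * (\<Sum>q\<in>UNIV. v q * H (ev p) (ev q)))"
    by (subst lin_decomp[OF l2, of _ v]) (rule refl)
  also have "\<dots> = (\<Sum>p\<in>UNIV. \<Sum>q\<in>UNIV. u p * v q * H (ev p) (ev q))"
    by (simp add: sum_distrib_left mult.assoc mult.left_commute)
  finally show ?thesis .
qed

lemma bexp:
  fixes G :: "('n::finite \<Rightarrow> 'k::field) \<Rightarrow> ('n \<Rightarrow> 'k) \<Rightarrow> ('n \<Rightarrow> 'k)"
  assumes l1: "\<And>v. lin sc sc (\<lambda>u. G u v)" and l2: "\<And>u. lin sc sc (G u)"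
  shows "pairing y (G u v) = (\<Sum>p\<in>UNIV. \<Sum>q\<in>UNIV. u p * v q * pairing y (G (ev p) (ev q)))"
proof (rule sexp[where H="\<lambda>u v. pairing y (G u v)"])
  fix v show "lin sc (\<lambda>c s. c * s) (\<lambda>u. pairing y (G u v))"
    by (simp add: lin_def lin_add[OF l1] lin_scale[OF l1])
next
  fix u show "lin sc (\<lambda>c s. c * s) (\<lambda>v. pairing y (G u v))"
    by (simp add: lin_def lin_add[OF l2] lin_scale[OF l2])
qed

context HL begin

lemma R1a: "ada (phi x) (phid a) = phid (ada x a)"
  by (rule vec_eqI) (simp add: padc pd phi_br_wi phi_hom)

lemma R1b: "ada (br x y) (phid a) = ada (phi x) (ada y a) - ada (phi y) (ada x a)"
proof (rule vec_eqI)
  fix z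
  have 1: "pairing z (ada (br x y) (phid a)) = - pairing (br (br x y) (phi z)) a"
    by (simp add: padc pd phi_br_wi)
  have 2: "pairing z (ada (phi x) (ada y a)) = pairing (br (phi y) (br x z)) a"
    by (simp add: padc)
  have 3: "pairing z (ada (phi y) (ada x a)) = pairing (br (phi x) (br y z)) a"
    by (simp add: padc)
  have J: "br (phi z) (br x y) = - br (phi x) (br y z) - br (phi y) (br z x)"
    by (rule sum3_0[OF br_jac])
  have s1: "br (br x y) (phi z) = - br (phi z) (br x y)" by (rule br_skew)
  have s2: "br x z = - br z x" by (rule br_skew)
  show "pairing z (ada (br x y) (phid a)) = pairing z (ada (phi x) (ada y a) - ada (phi y) (ada x a))"
    unfolding pairing_diff2 1 2 3 s1 s2 J by simp
qed

lemma R2a: "adb (phid a) (phi x) = phi (adb a x)"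
  by (rule vec_eqI') (simp add: padcd pd[symmetric] phid_brd_wi phid_hom)

lemma R2b: "adb (brd a b) (phi x) = adb (phid a) (adb b x) - adb (phid b) (adb a x)"
proof (rule vec_eqI')
  fix c
  have 1: "pairing (adb (brd a b) (phi x)) c = - pairing x (brd (brd a b) (phid c))"
    by (simp add: padcd pd[symmetric] phid_brd_wi)
  have 2: "pairing (adb (phid a) (adb b x)) c = pairing x (brd (phid b) (brd a c))"
    by (simp add: padcd)
  have 3: "pairing (adb (phid b) (adb a x)) c = pairing x (brd (phid a) (brd b c))"
    by (simp add: padcd)
  have J: "brd (phid c) (brd a b) = - brd (phid a) (brd b c) - brd (phid b) (brd c a)"
    by (rule sum3_0[OF brd_jac])
  have s1: "brd (brd a b) (phid c) = - brd (phid c) (brd a b)" by (rule brd_skew)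
  have s2: "brd a c = - brd c a" by (rule brd_skew)
  show "pairing (adb (brd a b) (phi x)) c = pairing (adb (phid a) (adb b x) - adb (phid b) (adb a x)) c"
    unfolding pairing_diff1 1 2 3 s1 s2 J by simp
qed


definition PB where "PB x y a b \<longleftrightarrow> pairing (br x y) (brd a b) =
   - pairing y (brd (ada x a) (phid b) + brd (phid a) (ada x b))
   + pairing x (brd (ada y a) (phid b) + brd (phid a) (ada y b))"

lemma padc_rev: "pairing (br (phi y) z) a = - pairing z (ada y a)"
  by (simp add: padc)

lemma key1: "pairing y (ada (adb b x) (phid a)) = pairing x (brd (phid b) (ada y a))"
proof -
  have "pairing y (ada (adb b x) (phid a)) = - pairing (br (adb b x) (phi y)) a"
    by (simp add: padc pd phi_br_wi)
  also have "\<dots> = pairing (br (phi y) (adb b x)) a"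
    by (subst br_skew) simp
  also have "\<dots> = pairing x (brd (phid b) (ada y a))"
    by (simp add: padc_rev padcd)
  finally show ?thesis .
qed

lemma key2: "pairing (br (adb a x) (phi y)) b = - pairing x (brd (phid a) (ada y b))"
proof -
  have "pairing (br (adb a x) (phi y)) b = - pairing (br (phi y) (adb a x)) b"
    by (subst br_skew) simp
  also have "\<dots> = - pairing x (brd (phid a) (ada y b))"
    by (simp add: padc_rev padcd)
  finally show ?thesis .
qed

lemma key3: "pairing (adb (ada y a) (phi x)) b = - pairing x (brd (ada y a) (phid b))"
  by (simp add: padcd pd[symmetric] phid_brd_wi)

lemma C2_iff: "(ada (phi x) (brd a b) = brd (ada x a) (phid b) + brd (phid a) (ada x b)
      + ada (adb b x) (phid a) - ada (adb a x) (phid b)) \<longleftrightarrow> (\<forall>y. PB x y a b)"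
proof -
  have e: "pairing y (ada (phi x) (brd a b)) = pairing y (brd (ada x a) (phid b) + brd (phid a) (ada x b)
      + ada (adb b x) (phid a) - ada (adb a x) (phid b)) \<longleftrightarrow> PB x y a b" for y
  proof -
    have s: "brd (phid b) (ada y a) = - brd (ada y a) (phid b)" by (rule brd_skew)
    show ?thesis unfolding PB_def pairing_add2 pairing_diff2 key1 s
      by (simp add: padc) (simp add: algebra_simps, metis add_diff_cancel_left' diff_add_cancel minus_diff_eq)
  qed
  show ?thesis
    using e vec_eqI by metis
qed


lemma C1_iff: "(adb (phid a) (br x y) = br (adb a x) (phi y) + br (phi x) (adb a y)
      + adb (ada y a) (phi x) - adb (ada x a) (phi y)) \<longleftrightarrow> (\<forall>b. PB x y a b)"
proof -
  have e: "pairing (adb (phid a) (br x y)) b = pairing (br (adb a x) (phi y) + br (phi x) (adb a y)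
      + adb (ada y a) (phi x) - adb (ada x a) (phi y)) b \<longleftrightarrow> PB x y a b" for b
  proof -
    have k: "pairing (br (phi x) (adb a y)) b = pairing y (brd (phid a) (ada x b))"
      by (simp add: padc_rev padcd)
    show ?thesis unfolding PB_def pairing_add1 pairing_diff1 key2 key3 k
      by (simp add: padcd) (simp add: algebra_simps, metis add_diff_cancel_left' diff_add_cancel minus_diff_eq)
  qed
  show ?thesis
    using e vec_eqI' by metis
qed


lemma tmap_Delta: "tmap L M (Delta brd y) i j = pairing y (brd (\<lambda>p. L (ev p) i) (\<lambda>q. M (ev q) j))"
  unfolding tmap_def Delta_def
  by (subst bexp[OF lin_brd1 lin_brd2]) (simp add: mult.commute mult.left_commute)

lemma ada_ev: "(\<lambda>p. br (phi x) (ev p) i) = - ada x (ev i)"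
  by (simp add: adc_def fun_eq_iff)
lemma phid_ev: "(\<lambda>q. phi (ev q) j) = phid (ev j)"
  by (simp add: dual_map_def fun_eq_iff)

lemma tad_Delta: "tad br phi (phi x) (Delta brd y) i j =
   - pairing y (brd (ada x (ev i)) (phid (ev j)) + brd (phid (ev i)) (ada x (ev j)))"
  unfolding tad_def tmap_Delta ada_ev phid_ev by simp

lemma bialg_iff: "hom_lie_bialgebra br phi brd \<longleftrightarrow> (\<forall>x y i j. PB x y (ev i) (ev j))"
proof -
  have "Delta brd (br x y) = (\<lambda>i j. tad br phi (phi x) (Delta brd y) i j - tad br phi (phi y) (Delta brd x) i j)
     \<longleftrightarrow> (\<forall>i j. PB x y (ev i) (ev j))" for x y
    unfolding fun_eq_iff tad_Delta PB_def by (simp add: Delta_def algebra_simps)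
  then show ?thesis unfolding hom_lie_bialgebra_def by blast
qed

definition Fpb where "Fpb x y a b = pairing (br x y) (brd a b)
   + pairing y (brd (ada x a) (phid b) + brd (phid a) (ada x b))
   - pairing x (brd (ada y a) (phid b) + brd (phid a) (ada y b))"

lemma PB_Fpb: "PB x y a b \<longleftrightarrow> Fpb x y a b = 0"
  unfolding PB_def Fpb_def by (simp add: algebra_simps)

lemma Fpb_lin1: "lin sc (\<lambda>c s. c * s) (\<lambda>a. Fpb x y a b)"
  unfolding lin_def Fpb_def by (simp add: algebra_simps)
lemma Fpb_lin2: "lin sc (\<lambda>c s. c * s) (Fpb x y a)"
  unfolding lin_def Fpb_def by (simp add: algebra_simps)

lemma PB_ext: "(\<forall>x y i j. PB x y (ev i) (ev j)) \<Longrightarrow> PB x y a b"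
  unfolding PB_Fpb by (subst sexp[OF Fpb_lin1 Fpb_lin2]) simp


lemma PB_all: "hom_lie_bialgebra br phi brd \<longleftrightarrow> (\<forall>x y a b. PB x y a b)"
  using bialg_iff PB_ext by blast

lemma rep_adc: "representation sc br phi sc phid ada"
  unfolding representation_def using lin_phid lin_adc2 lin_adc1 R1a R1b by blast

lemma rep_adcd: "representation sc brd phid sc phi adb"
  unfolding representation_def using lin_phi lin_adcd2 lin_adcd1 R2a R2b by blast

lemma mp_iff: "matched_pair sc br phi sc brd phid ada adb \<longleftrightarrow>
   (\<forall>x y a. adb (phid a) (br x y) = br (adb a x) (phi y) + br (phi x) (adb a y)
      + adb (ada y a) (phi x) - adb (ada x a) (phi y))
 \<and> (\<forall>x a b. ada (phi x) (brd a b) = brd (ada x a) (phid b) + brd (phid a) (ada x b)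
      + ada (adb b x) (phid a) - ada (adb a x) (phid b))"
  unfolding matched_pair_def using hl hld rep_adc rep_adcd by blast

lemma part1: "hom_lie_bialgebra br phi brd \<longleftrightarrow> matched_pair sc br phi sc brd phid ada adb"
  unfolding mp_iff PB_all C1_iff C2_iff by blast

end



lemma sc_add: "sc c (x + y) = sc c x + sc c y" for x y :: "'n \<Rightarrow> 'k::field" by (simp add: fun_eq_iff algebra_simps)
lemma sc_diff: "sc c (x - y) = sc c x - sc c y" for x y :: "'n \<Rightarrow> 'k::field" by (simp add: fun_eq_iff algebra_simps)
lemma sc_minus: "sc c (- x) = - sc c x" for x :: "'n \<Rightarrow> 'k::field" by (simp add: fun_eq_iff)

context HL begin

definition Kd where "Kd u v = (br (fst u) (fst v) + adb (snd u) (fst v) - adb (snd v) (fst u),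
   brd (snd u) (snd v) + ada (fst u) (snd v) - ada (fst v) (snd u))"
definition Phd where "Phd u = (phi (fst u), phid (snd u))"

lemma Kd_simp[simp]: "Kd (x, a) (y, b) = (br x y + adb a y - adb b x, brd a b + ada x b - ada y a)"
  by (simp add: Kd_def)
lemma Phd_simp[simp]: "Phd (x, a) = (phi x, phid a)" by (simp add: Phd_def)

lemma lin_Kd2: "lin psc psc (Kd u)"
  unfolding lin_def Kd_def psc_def by (simp add: sc_add sc_diff algebra_simps)
lemma lin_Kd1: "lin psc psc (\<lambda>u. Kd u v)"
  unfolding lin_def Kd_def psc_def by (simp add: sc_add sc_diff algebra_simps)
lemma lin_Phd: "lin psc psc Phd"
  unfolding lin_def Phd_def psc_def by simp
lemma Kd_skew: "Kd u v = - Kd v u"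
  using br_skew[of "fst u" "fst v"] brd_skew[of "snd u" "snd v"] by (simp add: Kd_def algebra_simps)
lemma Phd_hom: "Phd (Kd u v) = Kd (Phd u) (Phd v)"
  by (simp add: Kd_def Phd_def R1a R2a phi_hom phid_hom)


definition jac where "jac u v w = Kd (Phd u) (Kd v w) + Kd (Phd v) (Kd w u) + Kd (Phd w) (Kd u v)"

lemmas Kd_add1 = lin_add[OF lin_Kd1] and Kd_add2 = lin_add[OF lin_Kd2] and Phd_add = lin_add[OF lin_Phd]

lemma jac_cyc: "jac u v w = jac v w u" unfolding jac_def by (simp add: algebra_simps)
lemma jac_add1: "jac (u + u') v w = jac u v w + jac u' v w"
  unfolding jac_def by (simp add: Kd_add1 Kd_add2 Phd_add algebra_simps)
lemma jac_add2: "jac u (v + v') w = jac u v w + jac u v' w"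
  by (metis jac_add1 jac_cyc)
lemma jac_add3: "jac u v (w + w') = jac u v w + jac u v w'"
  by (metis jac_add1 jac_cyc)

lemma jac_ggg: "jac (x, 0) (y, 0) (z, 0) = 0"
  unfolding jac_def using br_jac[of x y z] by (simp add: algebra_simps zero_prod_def)
lemma jac_hhh: "jac (0, a) (0, b) (0, c) = 0"
  unfolding jac_def using brd_jac[of a b c] by (simp add: algebra_simps zero_prod_def)


lemma jac_ggh:
  assumes C1: "adb (phid c) (br x y) = br (adb c x) (phi y) + br (phi x) (adb c y)
      + adb (ada y c) (phi x) - adb (ada x c) (phi y)"
  shows "jac (x, 0) (y, 0) (0, c) = 0"
  unfolding jac_def using C1 R1b[of x y c] br_skew[of "adb c x" "phi y"]
  by (simp add: algebra_simps zero_prod_def)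

lemma jac_hhg:
  assumes C2: "ada (phi x) (brd a b) = brd (ada x a) (phid b) + brd (phid a) (ada x b)
      + ada (adb b x) (phid a) - ada (adb a x) (phid b)"
  shows "jac (0, a) (0, b) (x, 0) = 0"
  unfolding jac_def using C2 R2b[of a b x] brd_skew[of "ada x a" "phid b"]
  by (simp add: algebra_simps zero_prod_def)


lemma jac_all:
  assumes C1: "\<And>x y a. adb (phid a) (br x y) = br (adb a x) (phi y) + br (phi x) (adb a y)
      + adb (ada y a) (phi x) - adb (ada x a) (phi y)"
    and C2: "\<And>x a b. ada (phi x) (brd a b) = brd (ada x a) (phid b) + brd (phid a) (ada x b)
      + ada (adb b x) (phid a) - ada (adb a x) (phid b)"
  shows "jac u v w = 0"
proof -
  obtain x a where u: "u = (x, 0) + (0, a)" by (cases u) simp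
  obtain y b where v: "v = (y, 0) + (0, b)" by (cases v) simp
  obtain z c where w: "w = (z, 0) + (0, c)" by (cases w) simp
  have g1: "jac (x, 0) (y, 0) (0, c) = 0" for x y c by (rule jac_ggh[OF C1])
  have g2: "jac (0, a) (0, b) (x, 0) = 0" for a b x by (rule jac_hhg[OF C2])
  have g3: "jac (x, 0) (0, b) (z, 0) = 0" for x b z by (rule trans[OF jac_cyc trans[OF jac_cyc g1]])
  have g4: "jac (0, a) (y, 0) (z, 0) = 0" for a y z by (rule trans[OF jac_cyc g1])
  have g5: "jac (x, 0) (0, b) (0, c) = 0" for x b c by (rule trans[OF jac_cyc g2])
  have g6: "jac (0, a) (y, 0) (0, c) = 0" for a y c by (rule trans[OF jac_cyc trans[OF jac_cyc g2]])
  show ?thesis unfolding u v w jac_add1 jac_add2 jac_add3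
    by (simp add: g1 g2 g3 g4 g5 g6 jac_ggg jac_hhh)
qed


lemma hom_lie_Kd:
  assumes C1: "\<And>x y a. adb (phid a) (br x y) = br (adb a x) (phi y) + br (phi x) (adb a y)
      + adb (ada y a) (phi x) - adb (ada x a) (phi y)"
    and C2: "\<And>x a b. ada (phi x) (brd a b) = brd (ada x a) (phid b) + brd (phid a) (ada x b)
      + ada (adb b x) (phid a) - ada (adb a x) (phid b)"
  shows "hom_lie psc Kd Phd"
  unfolding hom_lie_def bilin_def
  using lin_Kd1 lin_Kd2 lin_Phd Kd_skew Phd_hom jac_all[OF C1 C2, unfolded jac_def] by blast

lemma Bform_simp[simp]: "Bform (x, a) (y, b) = pairing x b + pairing y a"
  by (simp add: Bform_def)

lemma Bform_bilin: "bilin psc (\<lambda>c s. c * s) (Bform :: ('n \<Rightarrow> 'k) \<times> ('n \<Rightarrow> 'k) \<Rightarrow> _)"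
  unfolding bilin_def lin_def Bform_def psc_def by (simp add: algebra_simps)

lemma Bform_sym: "Bform u v = Bform v u"
  by (simp add: Bform_def add.commute)

lemma Bform_fst: "Bform u (0, ev j) = fst u j" by (simp add: Bform_def)
lemma Bform_snd: "Bform u (ev j, 0) = snd u j" by (simp add: Bform_def)

lemma Bform_nondeg: "(\<forall>v. Bform u v = 0) \<Longrightarrow> u = (0 :: ('n \<Rightarrow> 'k) \<times> ('n \<Rightarrow> 'k))"
  by (metis Bform_fst Bform_snd prod_eq_iff fun_eq_iff zero_fun_apply fst_zero snd_zero)

lemma h1: "pairing (phi y) (brd (phid c) a) = pairing y (brd c (phid a))"
  by (simp add: pd[symmetric] phid_brd_wi)

lemma Bform_inv: "invariant_form Bform Kd Phd"
  unfolding invariant_form_def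
proof (intro conjI allI)
  fix X Y Z :: "('n \<Rightarrow> 'k) \<times> ('n \<Rightarrow> 'k)"
  obtain x a where X: "X = (x, a)" by (cases X)
  obtain y b where Y: "Y = (y, b)" by (cases Y)
  obtain z c where Z: "Z = (z, c)" by (cases Z)
  show "Bform (Kd X Y) Z = Bform X (Kd (Phd Y) Z)"
    unfolding X Y Z
    using br_skew[of y x] br_skew[of z "phi x"] brd_skew[of b a] brd_skew[of c "phid a"]
    by (simp add: padc padcd pd phi_br_wi h1 algebra_simps)
next
  fix X Y :: "('n \<Rightarrow> 'k) \<times> ('n \<Rightarrow> 'k)"
  obtain x a where X: "X = (x, a)" by (cases X)
  obtain y b where Y: "Y = (y, b)" by (cases Y)
  show "Bform (Phd X) Y = Bform X (Phd Y)"
    unfolding X Y by (simp add: pd pairing_sym add.commute)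
qed


lemma manin_Kd:
  assumes C1: "\<And>x y a. adb (phid a) (br x y) = br (adb a x) (phi y) + br (phi x) (adb a y)
      + adb (ada y a) (phi x) - adb (ada x a) (phi y)"
    and C2: "\<And>x a b. ada (phi x) (brd a b) = brd (ada x a) (phid b) + brd (phid a) (ada x b)
      + ada (adb b x) (phid a) - ada (adb a x) (phid b)"
  shows "manin_triple_sum Kd Phd Bform br phi brd phid"
  unfolding manin_triple_sum_def
  using hom_lie_Kd[OF C1 C2] Bform_bilin Bform_sym Bform_nondeg Bform_inv by simp

lemma manin_KPhi:
  assumes M: "manin_triple_sum K Phi Bform br phi brd phid"
  shows "K = Kd" and "Phi = Phd"
proof -
  have hlK: "hom_lie psc K Phi" using M unfolding manin_triple_sum_def by blast
  have inv: "Bform (K X Y) Z = Bform X (K (Phi Y) Z)" for X Y Z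
    using M unfolding manin_triple_sum_def invariant_form_def by blast
  have Kgg: "K (x, 0) (y, 0) = (br x y, 0)" for x y using M unfolding manin_triple_sum_def by blast
  have Khh: "K (0, a) (0, b) = (0, brd a b)" for a b using M unfolding manin_triple_sum_def by blast
  have Pg: "Phi (x, 0) = (phi x, 0)" for x using M unfolding manin_triple_sum_def by blast
  have Ph: "Phi (0, a) = (0, phid a)" for a using M unfolding manin_triple_sum_def by blast
  have l1: "lin psc psc (\<lambda>u. K u v)" for v using hlK unfolding hom_lie_def bilin_def by blast
  have l2: "lin psc psc (K u)" for u using hlK unfolding hom_lie_def bilin_def by blast
  have lP: "lin psc psc Phi" using hlK unfolding hom_lie_def by blast
  have sk: "K u v = - K v u" for u v using hlK unfolding hom_lie_def by blast
  have Bneg: "Bform (- u) v = - Bform u v" for u v :: "('n \<Rightarrow> 'k) \<times> ('n \<Rightarrow> 'k)"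
    by (simp add: Bform_def)
  have Kgh: "K (x, 0) (0, b) = (- adb b x, ada x b)" for x b
  proof -
    have f: "fst (K (x, 0) (0, b)) j = - adb b x j" for j
    proof -
      have "fst (K (x, 0) (0, b)) j = Bform (K (x, 0) (0, b)) (0, ev j)" by (simp add: Bform_fst)
      also have "\<dots> = Bform (x, 0) (K (0, phid b) (0, ev j))" by (simp add: inv Ph)
      also have "\<dots> = - adb b x j" by (simp add: Khh adcd_def)
      finally show ?thesis .
    qed
    have s: "snd (K (x, 0) (0, b)) j = ada x b j" for j
    proof -
      have "snd (K (x, 0) (0, b)) j = Bform (K (x, 0) (0, b)) (ev j, 0)" by (simp add: Bform_snd)
      also have "\<dots> = - Bform (K (0, b) (x, 0)) (ev j, 0)" by (subst sk) (rule Bneg)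
      also have "\<dots> = - Bform (0, b) (K (phi x, 0) (ev j, 0))" by (simp add: inv Pg)
      also have "\<dots> = ada x b j" by (simp add: Kgg adc_def)
      finally show ?thesis .
    qed
    show ?thesis using f s by (simp add: prod_eq_iff fun_eq_iff)
  qed
  have Khg: "K (0, a) (y, 0) = (adb a y, - ada y a)" for a y
    by (subst sk) (simp add: Kgh)
  show "K = Kd"
  proof (intro ext)
    fix u v :: "('n \<Rightarrow> 'k) \<times> ('n \<Rightarrow> 'k)"
    obtain x a where u: "u = (x, 0) + (0, a)" by (cases u) simp
    obtain y b where v: "v = (y, 0) + (0, b)" by (cases v) simp
    show "K u v = Kd u v"
      unfolding u v lin_add[OF l1] lin_add[OF l2] Kgg Khh Kgh Khg by (simp add: Kd_def)
  qed
  show "Phi = Phd"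
  proof (intro ext)
    fix u :: "('n \<Rightarrow> 'k) \<times> ('n \<Rightarrow> 'k)"
    obtain x a where u: "u = (x, 0) + (0, a)" by (cases u) simp
    show "Phi u = Phd u" unfolding u lin_add[OF lP] Pg Ph by simp
  qed
qed

lemma C2_from_jac:
  assumes "jac (0, a) (0, b) (x, 0) = 0"
  shows "ada (phi x) (brd a b) = brd (ada x a) (phid b) + brd (phid a) (ada x b)
      + ada (adb b x) (phid a) - ada (adb a x) (phid b)"
proof -
  have "snd (jac (0, a) (0, b) (x, 0)) = 0" using assms by simp
  then show ?thesis using brd_skew[of "ada x a" "phid b"]
    by (simp add: jac_def algebra_simps)
qed


lemma part2: "matched_pair sc br phi sc brd phid ada adb \<longleftrightarrow>
   (\<exists>K Phi. manin_triple_sum K Phi Bform br phi brd phid)"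
proof
  assume "matched_pair sc br phi sc brd phid ada adb"
  then have C1: "\<And>x y a. adb (phid a) (br x y) = br (adb a x) (phi y) + br (phi x) (adb a y)
      + adb (ada y a) (phi x) - adb (ada x a) (phi y)"
    and C2: "\<And>x a b. ada (phi x) (brd a b) = brd (ada x a) (phid b) + brd (phid a) (ada x b)
      + ada (adb b x) (phid a) - ada (adb a x) (phid b)"
    unfolding mp_iff by blast+
  show "\<exists>K Phi. manin_triple_sum K Phi Bform br phi brd phid"
    using manin_Kd[OF C1 C2] by blast
next
  assume "\<exists>K Phi. manin_triple_sum K Phi Bform br phi brd phid"
  then obtain K Phi where M: "manin_triple_sum K Phi Bform br phi brd phid" by blast
  have "hom_lie psc Kd Phd" using M manin_KPhi[OF M] unfolding manin_triple_sum_def by simp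
  then have J: "jac u v w = 0" for u v w unfolding hom_lie_def jac_def by blast
  have C2: "\<forall>x a b. ada (phi x) (brd a b) = brd (ada x a) (phid b) + brd (phid a) (ada x b)
      + ada (adb b x) (phid a) - ada (adb a x) (phid b)"
    using C2_from_jac[OF J] by blast
  then have "\<forall>x y a b. PB x y a b" unfolding C2_iff by blast
  then show "matched_pair sc br phi sc brd phid ada adb"
    unfolding mp_iff C1_iff C2_iff by blast
qed

end

theorem theorem3p12:
  fixes br brd :: "('n::finite \<Rightarrow> 'k::field) \<Rightarrow> ('n \<Rightarrow> 'k) \<Rightarrow> ('n \<Rightarrow> 'k)"
    and phi :: "('n \<Rightarrow> 'k) \<Rightarrow> ('n \<Rightarrow> 'k)"
  assumes "hom_lie sc br phi" and "weakly_involutive br phi"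
    and "hom_lie sc brd (dual_map phi)" and "weakly_involutive brd (dual_map phi)"
  shows "(hom_lie_bialgebra br phi brd \<longleftrightarrow>
            matched_pair sc br phi sc brd (dual_map phi) (adc br phi) (adcd brd phi))
       \<and> (matched_pair sc br phi sc brd (dual_map phi) (adc br phi) (adcd brd phi) \<longleftrightarrow>
            (\<exists>K Phi. manin_triple_sum K Phi Bform br phi brd (dual_map phi)))"
proof -
  interpret HL br brd phi using assms by (unfold_locales)
  show ?thesis using part1 part2 by blast
qed

end
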